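(* The class $c_r$ of relative convex sequences is not closed under addition: for instance the sequences $(\sqrt{|n-3|})_{n\ge1}$ and $(\sqrt{|n-9|})_{n\ge1}$ both belong to $c_r$, but their sum $(\sqrt{|n-3|}+\sqrt{|n-9|})_{n\ge1}$ does not.
   Context: For a real sequence $(x_i)$, $\Delta x_i=x_{i+1}-x_i$. A real sequence $a=(a_i)_{i\ge1}$ is relative convex if there exists a strictly increasing real sequence $(t_i)_{i\ge1}$ such that $(\Delta a_i/\Delta t_i)_{i\ge1}$ is non-decreasing; $c_r$ denotes the class of all relative convex sequences. *)

theory Defs
  imports Complex_Main
begin

text \<open>Sequences are indexed by i \<ge> 1; a sequence is a function nat \<Rightarrow> real whose value
  at index 0 is ignored.\<close>

definition fdiff :: "(nat \<Rightarrow> real) \<Rightarrow> nat \<Rightarrow> real" where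
  "fdiff x i = x (Suc i) - x i"

definition relative_convex :: "(nat \<Rightarrow> real) \<Rightarrow> bool" where
  "relative_convex a \<longleftrightarrow>
     (\<exists>t :: nat \<Rightarrow> real.
        (\<forall>i\<ge>1. \<forall>j\<ge>i. i < j \<longrightarrow> t i < t j) \<and>
        (\<forall>i\<ge>1. \<forall>j\<ge>i. fdiff a i / fdiff t i \<le> fdiff a j / fdiff t j))"

definition c_r :: "(nat \<Rightarrow> real) set" where
  "c_r = {a. relative_convex a}"

end

theory Submission
  imports Defs
begin

lemma rc_sign:
  fixes a :: "nat \<Rightarrow> real" and c :: nat
  assumes nz: "\<And>i. i \<ge> 1 \<Longrightarrow> fdiff a i \<noteq> 0"
    and sg: "\<And>i. i \<ge> 1 \<Longrightarrow> (fdiff a i < 0 \<longleftrightarrow> i < c)"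
  shows "relative_convex a"
proof -
  define t where "t n = (\<Sum>k<n. \<bar>fdiff a k\<bar>)" for n
  have ft: "fdiff t i = \<bar>fdiff a i\<bar>" for i by (simp add: fdiff_def t_def)
  have step: "t k < t (Suc k)" if "k \<ge> 1" for k
    using ft[of k] nz[OF that] by (simp add: fdiff_def)
  have mono: "t i < t (i + Suc d)" if "i \<ge> 1" for i d
  proof (induction d)
    case 0 then show ?case using step[OF that] by simp
  next
    case (Suc d) then show ?case using step[of "i + Suc d"] that by simp
  qed
  have ratio: "fdiff a i / fdiff t i = (if i < c then -1 else 1)" if "i \<ge> 1" for i
    using nz[OF that] sg[OF that] unfolding ft by (auto simp: abs_if)
  show ?thesis unfolding relative_convex_def
  proof (intro exI[of _ t] conjI allI impI)
    fix i j :: nat assume "i \<ge> 1" "j \<ge> i" "i < j"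
    then obtain d where "j = i + Suc d" by (metis less_imp_Suc_add add_Suc_right)
    then show "t i < t j" using mono[OF \<open>i \<ge> 1\<close>] by simp
  next
    fix i j :: nat assume "i \<ge> 1" "j \<ge> i"
    then show "fdiff a i / fdiff t i \<le> fdiff a j / fdiff t j"
      using ratio[of i] ratio[of j] by auto
  qed
qed

lemma rc_sqrt: "relative_convex (\<lambda>n::nat. sqrt \<bar>real n - real c\<bar>)"
proof (rule rc_sign[where c=c])
  fix i :: nat assume "i \<ge> 1"
  show "fdiff (\<lambda>n::nat. sqrt \<bar>real n - real c\<bar>) i \<noteq> 0"
  proof
    assume "fdiff (\<lambda>n::nat. sqrt \<bar>real n - real c\<bar>) i = 0"
    then have "\<bar>real (Suc i) - real c\<bar> = \<bar>real i - real c\<bar>" by (simp add: fdiff_def)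
    then have "2 * real i + 1 = 2 * real c"
      by (cases "real i \<ge> real c"; cases "real (Suc i) \<ge> real c") (simp_all add: abs_if)
    then have "real (2*i+1) = real (2*c)" by simp
    then have "2*i+1 = 2*c" by (simp only: of_nat_eq_iff)
    then show False by presburger
  qed
  show "(fdiff (\<lambda>n::nat. sqrt \<bar>real n - real c\<bar>) i < 0) = (i < c)"
  proof (cases "i < c")
    case True
    then have "\<bar>real (Suc i) - real c\<bar> < \<bar>real i - real c\<bar>" by auto
    then show ?thesis using True by (simp add: fdiff_def)
  next
    case False
    then have "\<bar>real (Suc i) - real c\<bar> > \<bar>real i - real c\<bar>" by auto
    then show ?thesis using False by (simp add: fdiff_def)
  qed
qed

lemma key: "sqrt 2 + 2 < 2 * sqrt 3"
proof -
  have s2: "sqrt 2 < 3/2" by (rule real_less_lsqrt) (auto simp: power2_eq_square)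
  have "(sqrt 2 + 2)^2 = 6 + 4 * sqrt 2" by (simp add: power2_eq_square algebra_simps)
  also have "\<dots> < (2 * sqrt 3)^2" using s2 by (simp add: power_mult_distrib)
  finally show ?thesis by (rule power2_less_imp_less) auto
qed

theorem corollary2p4:
  shows "(\<lambda>n::nat. sqrt \<bar>real n - 3\<bar>) \<in> c_r
       \<and> (\<lambda>n::nat. sqrt \<bar>real n - 9\<bar>) \<in> c_r
       \<and> (\<lambda>n::nat. sqrt \<bar>real n - 3\<bar> + sqrt \<bar>real n - 9\<bar>) \<notin> c_r
       \<and> \<not> (\<forall>a\<in>c_r. \<forall>b\<in>c_r. (\<lambda>n. a n + b n) \<in> c_r)"
proof -
  have A: "(\<lambda>n::nat. sqrt \<bar>real n - 3\<bar>) \<in> c_r"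
    using rc_sqrt[of 3] by (simp add: c_r_def)
  have B: "(\<lambda>n::nat. sqrt \<bar>real n - 9\<bar>) \<in> c_r"
    using rc_sqrt[of 9] by (simp add: c_r_def)
  have C: "(\<lambda>n::nat. sqrt \<bar>real n - 3\<bar> + sqrt \<bar>real n - 9\<bar>) \<notin> c_r"
  proof
    let ?s = "\<lambda>n::nat. sqrt \<bar>real n - 3\<bar> + sqrt \<bar>real n - 9\<bar>"
    assume "?s \<in> c_r"
    then obtain t :: "nat \<Rightarrow> real" where
      t1: "\<forall>i\<ge>1. \<forall>j\<ge>i. i < j \<longrightarrow> t i < t j" and
      t2: "\<forall>i\<ge>1. \<forall>j\<ge>i. fdiff ?s i / fdiff t i \<le> fdiff ?s j / fdiff t j"
      by (auto simp: c_r_def relative_convex_def)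
    have p5: "fdiff t 5 > 0" using t1[rule_format, of 5 6] by (simp add: fdiff_def)
    have p6: "fdiff t 6 > 0" using t1[rule_format, of 6 7] by (simp add: fdiff_def)
    have s4: "sqrt 4 = 2" by (rule real_sqrt_unique) auto
    have e5: "?s 5 = sqrt 2 + 2" using s4 by simp
    have e6: "?s 6 = 2 * sqrt 3" by simp
    have e7: "?s 7 = 2 + sqrt 2" using s4 by simp
    have d5: "fdiff ?s 5 > 0" using key e5 e6 by (simp add: fdiff_def)
    have d6: "fdiff ?s 6 < 0" using key e6 e7 by (simp add: fdiff_def)
    have "fdiff ?s 5 / fdiff t 5 \<le> fdiff ?s 6 / fdiff t 6" using t2[rule_format, of 5 6] by simp
    moreover have "fdiff ?s 5 / fdiff t 5 > 0" using d5 p5 by simp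
    moreover have "fdiff ?s 6 / fdiff t 6 < 0" using d6 p6 by (simp add: divide_neg_pos)
    ultimately show False by linarith
  qed
  have D: "\<not> (\<forall>a\<in>c_r. \<forall>b\<in>c_r. (\<lambda>n. a n + b n) \<in> c_r)"
  proof
    assume "\<forall>a\<in>c_r. \<forall>b\<in>c_r. (\<lambda>n. a n + b n) \<in> c_r"
    from this[rule_format, OF A B] C show False by simp
  qed
  show ?thesis using A B C D by blast
qed

end
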